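(* Let $n\ge3$, $0<\epsilon<1$, and define $\alpha,\beta,\gamma,\delta$ and the polynomial $Q(\rho)$ as in the context. If $\epsilon>0$ is sufficiently small, then $Q(\rho)>0$ for all $\rho\in(\epsilon,1)$.
   Context: $D(\epsilon) = -n\epsilon^{n+2} + (n+2)\epsilon^{n+1} + n - (n+2)\epsilon$, $N(\epsilon) = -n\epsilon^{n+1} + (n+1)\epsilon^n - 1$, $K(\epsilon) = -1 + \frac{n+1}{n-1}\epsilon - \epsilon^{n-1} + \frac{n-3}{n-1}\epsilon^n$, $M(\epsilon) = \frac{\epsilon^{n+1}-1}{n(n+1)} + \frac{\epsilon-\epsilon^n}{n(n-1)}$; $\delta = \Big(\epsilon^{n-2}(1-\epsilon) - \frac{(n+2)N K}{D} + \frac{n(n-3)}{n-1}\epsilon^{n-1} - (n-1)\epsilon^{n-2} + \frac{n+1}{n-1}\Big)\Big(\frac{(n+2)N}{D}M + \frac{-(n-1)\epsilon^n + n\epsilon^{n-1}-1}{n(n-1)}\Big)^{-1}$, $\gamma = n(n+1)(n+2)(M\delta + K)/D$, $\alpha = -1 - \frac{\delta}{n(n+1)} - \frac{\gamma}{(n+1)(n+2)}$, $\beta = \frac{n+1}{n-1} + \frac{\delta}{n(n-1)} + \frac{\gamma}{n(n+1)}$ (denominators are nonzero for small $\epsilon$); $Q(\rho) = -\frac{\gamma}{(n+1)(n+2)}\rho^{n+2} - \frac{\delta-\gamma}{n(n+1)}\rho^{n+1} - \Big(1 - \frac{2n+\delta}{n(n-1)}\Big)\rho^n + \rho^{n-1}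 - \alpha - \beta\rho$. *)

theory Defs
  imports Complex_Main
begin

definition Dfun :: "nat \<Rightarrow> real \<Rightarrow> real" where
  "Dfun n e = - real n * e ^ (n+2) + real (n+2) * e ^ (n+1) + real n - real (n+2) * e"

definition Nfun :: "nat \<Rightarrow> real \<Rightarrow> real" where
  "Nfun n e = - real n * e ^ (n+1) + real (n+1) * e ^ n - 1"

definition Kfun :: "nat \<Rightarrow> real \<Rightarrow> real" where
  "Kfun n e = -1 + (real n + 1) / (real n - 1) * e - e ^ (n-1)
              + (real n - 3) / (real n - 1) * e ^ n"

definition Mfun :: "nat \<Rightarrow> real \<Rightarrow> real" where
  "Mfun n e = (e ^ (n+1) - 1) / (real n * (real n + 1)) + (e - e ^ n) / (real n * (real n - 1))"

definition delta :: "nat \<Rightarrow> real \<Rightarrow> real" where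
  "delta n e =
     (e ^ (n-2) * (1 - e) - (real n + 2) * Nfun n e * Kfun n e / Dfun n e
       + real n * (real n - 3) / (real n - 1) * e ^ (n-1)
       - (real n - 1) * e ^ (n-2) + (real n + 1) / (real n - 1))
     / ((real n + 2) * Nfun n e / Dfun n e * Mfun n e
       + (- (real n - 1) * e ^ n + real n * e ^ (n-1) - 1) / (real n * (real n - 1)))"

definition gamma :: "nat \<Rightarrow> real \<Rightarrow> real" where
  "gamma n e = real n * (real n + 1) * (real n + 2) * (Mfun n e * delta n e + Kfun n e) / Dfun n e"

definition alpha :: "nat \<Rightarrow> real \<Rightarrow> real" where
  "alpha n e = -1 - delta n e / (real n * (real n + 1)) - gamma n e / ((real n + 1) * (real n + 2))"

definition beta :: "nat \<Rightarrow> real \<Rightarrow> real" where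
  "beta n e = (real n + 1) / (real n - 1) + delta n e / (real n * (real n - 1))
              + gamma n e / (real n * (real n + 1))"

definition Qpoly :: "nat \<Rightarrow> real \<Rightarrow> real \<Rightarrow> real" where
  "Qpoly n e r =
     - gamma n e / ((real n + 1) * (real n + 2)) * r ^ (n+2)
     - (delta n e - gamma n e) / (real n * (real n + 1)) * r ^ (n+1)
     - (1 - (2 * real n + delta n e) / (real n * (real n - 1))) * r ^ n
     + r ^ (n-1) - alpha n e - beta n e * r"

end

theory Submission imports Defs
begin
definition al :: "nat \<Rightarrow> real \<Rightarrow> real \<Rightarrow> real" where
 "al n d g = -1 - d / (real n * (real n + 1)) - g / ((real n + 1) * (real n + 2))"
definition be :: "nat \<Rightarrow> real \<Rightarrow> real \<Rightarrow> real" where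
 "be n d g = (real n + 1) / (real n - 1) + d / (real n * (real n - 1)) + g / (real n * (real n + 1))"
definition Qg :: "nat \<Rightarrow> real \<Rightarrow> real \<Rightarrow> real \<Rightarrow> real" where
 "Qg n d g r = - g / ((real n + 1) * (real n + 2)) * r ^ (n+2)
     - (d - g) / (real n * (real n + 1)) * r ^ (n+1)
     - (1 - (2 * real n + d) / (real n * (real n - 1))) * r ^ n
     + r ^ (n-1) - al n d g - be n d g * r"
definition Q1 :: "nat \<Rightarrow> real \<Rightarrow> real \<Rightarrow> real \<Rightarrow> real" where
 "Q1 n d g r = - g / (real n + 1) * r ^ (n+1) - (d - g) / real n * r ^ n
     - real n * (1 - (2 * real n + d) / (real n * (real n - 1))) * r ^ (n-1)
     + (real n - 1) * r ^ (n-2) - be n d g"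
definition E0 :: "nat \<Rightarrow> real \<Rightarrow> real" where
 "E0 n e = - (real n * (real n - 3) / (real n - 1) * e ^ (n-1)) + (real n - 1) * e ^ (n-2) - (real n + 1) / (real n - 1)"
definition E1 :: "nat \<Rightarrow> real \<Rightarrow> real" where
 "E1 n e = (- (real n - 1) * e ^ n + real n * e ^ (n-1) - 1) / (real n * (real n - 1))"

definition Pc :: "nat \<Rightarrow> real \<Rightarrow> real \<Rightarrow> real \<Rightarrow> real" where
 "Pc n d g r = - g * r^3 - (d - g) * r^2 - (real n ^ 2 - 3 * real n - d) * r + (real n - 1) * (real n - 2)"

lemma Qpoly_Qg: "Qpoly n e r = Qg n (delta n e) (gamma n e) r"
  unfolding Qpoly_def Qg_def al_def be_def alpha_def beta_def ..

lemma Qg_1: assumes "n \<ge> 3" shows "Qg n d g 1 = 0"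
proof -
  have "real n \<ge> 3" using assms by simp
  then have "real n \<noteq> 0" "real n - 1 \<noteq> 0" "real n + 1 \<noteq> 0" "real n + 2 \<noteq> 0" by auto
  then show ?thesis unfolding Qg_def al_def be_def
    apply (simp add: divide_simps) by (simp add: algebra_simps)
qed

lemma Q1_1: assumes "n \<ge> 3" shows "Q1 n d g 1 = 0"
proof -
  have "real n \<ge> 3" using assms by simp
  then have "real n \<noteq> 0" "real n - 1 \<noteq> 0" "real n + 1 \<noteq> 0" "real n + 2 \<noteq> 0" by auto
  then show ?thesis unfolding Q1_def be_def
    apply (simp add: divide_simps) by (simp add: algebra_simps)
qed

lemma Qg_deriv: assumes "n \<ge> 3" shows "(Qg n d g has_real_derivative Q1 n d g r) (at r)"
proof -
  obtain m where m: "n = m + 3" using assms by (metis add.commute le_iff_add)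
  have nz: "real m + 3 \<noteq> 0" "real m + 2 \<noteq> 0" "real m + 4 \<noteq> 0" "real m + 5 \<noteq> 0" by linarith+
  show ?thesis unfolding Qg_def Q1_def m
    apply (rule derivative_eq_intros refl)+
    apply (simp add: power_add)
    using nz by (simp add: divide_simps)
qed

lemma Q1_deriv: assumes "n \<ge> 3" shows "(Q1 n d g has_real_derivative r^(n-3) * Pc n d g r) (at r)"
proof -
  obtain m where m: "n = m + 3" using assms by (metis add.commute le_iff_add)
  have nz: "real m + 3 \<noteq> 0" "real m + 2 \<noteq> 0" "real m + 4 \<noteq> 0" "real m + 5 \<noteq> 0" by linarith+
  show ?thesis unfolding Pc_def Q1_def m
    apply (rule derivative_eq_intros refl)+
    apply (simp add: power_add)
    using nz apply (simp add: divide_simps)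
    by (simp add: algebra_simps power2_eq_square power3_eq_cube)
qed
lemma QgE: assumes "n \<ge> 3"
  shows "Qg n d g e = - Kfun n e - Mfun n e * d + g * Dfun n e / (real n * (real n + 1) * (real n + 2))"
proof -
  obtain m where m: "n = m + 3" using assms by (metis add.commute le_iff_add)
  have nz: "real m + 3 \<noteq> 0" "real m + 2 \<noteq> 0" "real m + 4 \<noteq> 0" "real m + 5 \<noteq> 0" by linarith+
  show ?thesis unfolding Qg_def al_def be_def Kfun_def Mfun_def Dfun_def m
    apply (simp add: power_add)
    using nz apply (simp add: divide_simps)
    by (simp add: algebra_simps)
qed

lemma Q1E: assumes "n \<ge> 3"
  shows "Q1 n d g e = E0 n e + E1 n e * d + Nfun n e / (real n * (real n + 1)) * g"
proof -
  obtain m where m: "n = m + 3" using assms by (metis add.commute le_iff_add)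
  have nz: "real m + 3 \<noteq> 0" "real m + 2 \<noteq> 0" "real m + 4 \<noteq> 0" "real m + 5 \<noteq> 0" by linarith+
  show ?thesis unfolding Q1_def be_def E0_def E1_def Nfun_def m
    apply (simp add: power_add)
    using nz apply (simp add: divide_simps)
    by (simp add: algebra_simps)
qed
definition Num :: "nat \<Rightarrow> real \<Rightarrow> real" where
 "Num n e = e ^ (n-2) * (1 - e) - (real n + 2) * Nfun n e * Kfun n e / Dfun n e
       + real n * (real n - 3) / (real n - 1) * e ^ (n-1)
       - (real n - 1) * e ^ (n-2) + (real n + 1) / (real n - 1)"
definition Den :: "nat \<Rightarrow> real \<Rightarrow> real" where
 "Den n e = (real n + 2) * Nfun n e / Dfun n e * Mfun n e + (- (real n - 1) * e ^ n + real n * e ^ (n-1) - 1) / (real n * (real n - 1))"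

lemma delta_ND: "delta n e = Num n e / Den n e" unfolding delta_def Num_def Den_def ..

lemma vals0: assumes "n \<ge> 3"
  shows "Dfun n 0 = real n" "Nfun n 0 = -1" "Kfun n 0 = -1" "Mfun n 0 = -1/(real n*(real n+1))"
    "Den n 0 = -2/(real n^2*(real n+1)*(real n-1))"
    "delta n 0 = -(real n*(real n+1))" "gamma n 0 = 0" "alpha n 0 = 0" "beta n 0 = 0"
proof -
  have x: "real n \<ge> 3" using assms by simp
  have nz: "real n \<noteq> 0" "real n - 1 \<noteq> 0" "real n + 1 \<noteq> 0" "real n + 2 \<noteq> 0" using x by auto
  have p: "(0::real)^(n-1) = 0" "(0::real)^(n-2) = 0" "(0::real)^n = 0" using assms by auto
  show D: "Dfun n 0 = real n" unfolding Dfun_def by simp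
  show N: "Nfun n 0 = -1" unfolding Nfun_def using assms by simp
  show K: "Kfun n 0 = -1" unfolding Kfun_def using assms by (simp add: power_0_left)
  show M: "Mfun n 0 = -1/(real n*(real n+1))" unfolding Mfun_def using assms by (simp add: power_0_left)
  show De: "Den n 0 = -2/(real n^2*(real n+1)*(real n-1))" unfolding Den_def D N M using assms nz
    apply (simp add: divide_simps power_0_left) by (simp add: algebra_simps power2_eq_square)
  have "Num n 0 = - ((real n + 2) * Nfun n 0 * Kfun n 0 / Dfun n 0) + (real n + 1) / (real n - 1)"
    unfolding Num_def using assms by (simp add: power_0_left)
  then have "delta n 0 = (- ((real n + 2) * Nfun n 0 * Kfun n 0 / Dfun n 0) + (real n + 1) / (real n - 1)) / Den n 0"
    by (simp add: delta_ND)
  also have "\<dots> = -(real n*(real n+1))" unfolding D N K De using nz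
    apply (simp add: divide_simps) by (simp add: algebra_simps power2_eq_square)
  finally show dl: "delta n 0 = -(real n*(real n+1))" .
  show g: "gamma n 0 = 0" unfolding gamma_def dl M K using nz by (simp add: divide_simps)
  show "alpha n 0 = 0" unfolding alpha_def g dl using nz by (simp add: divide_simps)
  show "beta n 0 = 0" unfolding beta_def g dl using nz by (simp add: divide_simps)
qed

lemma cont: assumes "n \<ge> 3"
  shows "isCont (Dfun n) 0" "isCont (Den n) 0" "isCont (delta n) 0" "isCont (gamma n) 0"
     "isCont (alpha n) 0" "isCont (beta n) 0"
proof -
  have x: "real n \<ge> 3" using assms by simp
  have nz: "real n \<noteq> 0" "real n - 1 \<noteq> 0" "real n + 1 \<noteq> 0" "real n + 2 \<noteq> 0" using x by auto
  have nz2: "real n * (real n + 1) \<noteq> 0" "real n * (real n - 1) \<noteq> 0" using nz by auto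
  have cD: "isCont (Dfun n) 0" unfolding Dfun_def[abs_def] by (intro continuous_intros)
  have cN: "isCont (Nfun n) 0" unfolding Nfun_def[abs_def] by (intro continuous_intros)
  have cK: "isCont (Kfun n) 0" unfolding Kfun_def[abs_def] by (intro continuous_intros)
  have cM: "isCont (Mfun n) 0" unfolding Mfun_def[abs_def] apply (intro continuous_intros) using nz2 by auto
  have D0: "Dfun n 0 \<noteq> 0" using vals0[OF assms] nz by simp
  have De0: "Den n 0 \<noteq> 0" using vals0[OF assms] nz by simp
  show cDe: "isCont (Den n) 0" unfolding Den_def[abs_def]
    apply (intro continuous_intros cD cN cM) using D0 De0 nz nz2 by auto
  have eq: "delta n = (\<lambda>e. Num n e / Den n e)" using delta_ND by auto
  have cNu: "isCont (Num n) 0" unfolding Num_def[abs_def]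
    apply (intro continuous_intros cD cN cK) using D0 nz by auto
  show cd: "isCont (delta n) 0" unfolding eq
    apply (intro continuous_intros cD cN cNu cDe) using D0 De0 nz nz2 by auto
  show cg: "isCont (gamma n) 0" unfolding gamma_def[abs_def]
    apply (intro continuous_intros cD cM cK cd) using D0 De0 nz nz2 by auto
  show "isCont (alpha n) 0" unfolding alpha_def[abs_def]
    apply (intro continuous_intros cg cd) using D0 De0 nz nz2 by auto
  show "isCont (beta n) 0" unfolding beta_def[abs_def]
    apply (intro continuous_intros cg cd) using D0 De0 nz nz2 by auto
  show "isCont (Dfun n) 0" by (rule cD)
qed
lemma Qg_e_zero: assumes "n \<ge> 3" "Dfun n e \<noteq> 0"
  shows "Qg n (delta n e) (gamma n e) e = 0"
proof -
  have "real n \<ge> 3" using assms by simp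
  then have nz: "real n \<noteq> 0" "real n + 1 \<noteq> 0" "real n + 2 \<noteq> 0" by auto
  have "gamma n e * Dfun n e / (real n * (real n + 1) * (real n + 2)) = Mfun n e * delta n e + Kfun n e"
  proof -
    have gen: "\<And>A X D::real. D \<noteq> 0 \<Longrightarrow> A \<noteq> 0 \<Longrightarrow> A * X / D * D / A = X" by simp
    have "real n * (real n + 1) * (real n + 2) \<noteq> 0" using nz by simp
    then show ?thesis unfolding gamma_def by (rule gen[OF assms(2)])
  qed
  then show ?thesis unfolding QgE[OF assms(1)] by (simp only:)
qed

lemma Q1_e: assumes "n \<ge> 3" "Dfun n e \<noteq> 0" "Den n e \<noteq> 0"
  shows "Q1 n (delta n e) (gamma n e) e = e ^ (n-2) * (1 - e)"
proof -
  have "real n \<ge> 3" using assms by simp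
  then have nz: "real n \<noteq> 0" "real n + 1 \<noteq> 0" "real n + 2 \<noteq> 0" by auto
  have g: "Nfun n e / (real n * (real n + 1)) * gamma n e
     = (real n + 2) * Nfun n e * Kfun n e / Dfun n e + delta n e * ((real n + 2) * Nfun n e / Dfun n e * Mfun n e)"
  proof -
    have gen: "\<And>A D c N M x K :: real. A \<noteq> 0 \<Longrightarrow> D \<noteq> 0 \<Longrightarrow> N / A * (A * c * (M * x + K) / D) = c * N * K / D + x * (c * N / D * M)"
      by (simp add: field_simps)
    have "real n * (real n + 1) \<noteq> 0" using nz by simp
    then show ?thesis unfolding gamma_def by (rule gen[OF _ assms(2)])
  qed
  have den: "Den n e = (real n + 2) * Nfun n e / Dfun n e * Mfun n e + E1 n e"
    unfolding Den_def E1_def ..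
  have num: "Num n e = e ^ (n-2) * (1 - e) - (real n + 2) * Nfun n e * Kfun n e / Dfun n e - E0 n e"
    unfolding Num_def E0_def by (simp add: algebra_simps)
  have "Q1 n (delta n e) (gamma n e) e = E0 n e + (real n + 2) * Nfun n e * Kfun n e / Dfun n e + delta n e * Den n e"
    unfolding Q1E[OF assms(1)] g den by (simp only: distrib_left add.assoc mult.commute)
  also have "delta n e * Den n e = Num n e" unfolding delta_ND using assms(3) by simp
  finally show ?thesis unfolding num by simp
qed

lemma absb: "0 \<le> (r::real) \<Longrightarrow> r \<le> 1 \<Longrightarrow> 1 \<le> q \<Longrightarrow> \<bar>c / q * r ^ k\<bar> \<le> \<bar>c\<bar>"
proof -
  assume a: "0 \<le> r" "r \<le> 1" "1 \<le> q"
  have rk: "r ^ k \<le> 1" "0 \<le> r ^ k" using a by (simp_all add: power_le_one)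
  have "\<bar>c / q * r ^ k\<bar> = \<bar>c\<bar> / q * r ^ k" using a rk by (simp add: abs_mult)
  also have "\<dots> \<le> \<bar>c\<bar> * r ^ k"
    apply (rule mult_right_mono[OF _ rk(2)]) using a by (simp add: divide_le_eq mult_le_cancel_left1)
  also have "\<dots> \<le> \<bar>c\<bar>" using rk by (simp add: mult_left_le)
  finally show ?thesis .
qed

definition P0 :: "nat \<Rightarrow> real \<Rightarrow> real" where
  "P0 n r = real n * (real n + 1) * r^2 - 2 * real n * (real n - 1) * r + (real n - 1) * (real n - 2)"
definition Q0 :: "nat \<Rightarrow> real \<Rightarrow> real" where
  "Q0 n r = r ^ (n+1) - 2 * r ^ n + r ^ (n-1)"

lemma Pc_err: assumes "0 \<le> r" "r \<le> 1"
  shows "\<bar>Pc n d g r - P0 n r\<bar> \<le> 2 * \<bar>g\<bar> + 2 * \<bar>d + real n * (real n + 1)\<bar>"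
proof -
  define d' where "d' = d + real n * (real n + 1)"
  have e: "Pc n d g r - P0 n r = - (g * r^3) - ((d' - g) * r^2) + d' * r^1"
    unfolding Pc_def P0_def d'_def by (simp add: algebra_simps power2_eq_square)
  have b1: "\<bar>g * r^3\<bar> \<le> \<bar>g\<bar>" "\<bar>(d' - g) * r^2\<bar> \<le> \<bar>d' - g\<bar>" "\<bar>d' * r^1\<bar> \<le> \<bar>d'\<bar>"
    using absb[OF assms, of 1 g 3] absb[OF assms, of 1 "d' - g" 2] absb[OF assms, of 1 d' 1] by simp_all
  show ?thesis unfolding e d'_def[symmetric] using b1 by linarith
qed

lemma Qg_err: assumes "n \<ge> 3" "0 \<le> r" "r \<le> 1"
  shows "\<bar>Qg n d g r - Q0 n r\<bar> \<le> 2 * \<bar>g\<bar> + 2 * \<bar>d + real n * (real n + 1)\<bar> + \<bar>al n d g\<bar> + \<bar>be n d g\<bar>"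
proof -
  define d' where "d' = d + real n * (real n + 1)"
  have x: "real n \<ge> 3" using assms by simp
  then have nz: "real n \<noteq> 0" "real n - 1 \<noteq> 0" "real n + 1 \<noteq> 0" "real n + 2 \<noteq> 0" by auto
  have e: "Qg n d g r - Q0 n r = - (g / ((real n + 1) * (real n + 2)) * r ^ (n+2))
      - ((d' - g) / (real n * (real n + 1)) * r ^ (n+1)) + d' / (real n * (real n - 1)) * r ^ n
      - al n d g - be n d g * r"
  proof -
    obtain m where m: "n = m + 3" using assms by (metis add.commute le_iff_add)
    have nz: "real m + 3 \<noteq> 0" "real m + 2 \<noteq> 0" "real m + 4 \<noteq> 0" "real m + 5 \<noteq> 0" by linarith+
    show ?thesis unfolding Qg_def Q0_def d'_def m
      apply (simp add: power_add)
      using nz apply (simp add: divide_simps)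
      by (simp add: algebra_simps)
  qed
  have q: "1 \<le> (real n + 1) * (real n + 2)" "1 \<le> real n * (real n + 1)" "1 \<le> real n * (real n - 1)"
    using x mult_mono[of 1 "real n + 1" 1 "real n + 2"] mult_mono[of 1 "real n" 1 "real n + 1"]
      mult_mono[of 1 "real n" 1 "real n - 1"] by simp_all
  have b1: "\<bar>g / ((real n + 1) * (real n + 2)) * r ^ (n+2)\<bar> \<le> \<bar>g\<bar>"
     "\<bar>(d' - g) / (real n * (real n + 1)) * r ^ (n+1)\<bar> \<le> \<bar>d' - g\<bar>"
     "\<bar>d' / (real n * (real n - 1)) * r ^ n\<bar> \<le> \<bar>d'\<bar>"
     "\<bar>be n d g * r\<bar> \<le> \<bar>be n d g\<bar>"
    using absb[OF assms(2,3) q(1), of g "n+2"] absb[OF assms(2,3) q(2), of "d' - g" "n+1"]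
      absb[OF assms(2,3) q(3), of d' n] absb[OF assms(2,3), of 1 "be n d g" 1] by simp_all
  have tri: "\<And>a b c p q::real. \<bar>- a - b + c - p - q\<bar> \<le> \<bar>a\<bar> + \<bar>b\<bar> + \<bar>c\<bar> + \<bar>p\<bar> + \<bar>q\<bar>" by linarith
  have gen: "\<And>a b c p q G D P B :: real. a \<le> G \<Longrightarrow> b \<le> D + G \<Longrightarrow> c \<le> D \<Longrightarrow> q \<le> B \<Longrightarrow> a + b + c + p + q \<le> 2 * G + 2 * D + p + B"
    by linarith
  have dg: "\<bar>d' - g\<bar> \<le> \<bar>d'\<bar> + \<bar>g\<bar>" by (rule abs_triangle_ineq4)
  show ?thesis unfolding e d'_def[symmetric]
    apply (rule order_trans[OF tri])
    apply (rule gen[OF b1(1) order_trans[OF b1(2) dg] b1(3) b1(4)])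
    done
qed
lemma P0_low: assumes "n \<ge> 3" "0 \<le> r" "r * (4 * real n) \<le> real n - 2"
  shows "P0 n r \<ge> 1"
proof -
  have x: "real n \<ge> 3" using assms by simp
  have h1: "(real n - 1) / 2 * (r * (4 * real n)) \<le> (real n - 1) / 2 * (real n - 2)"
    using assms(3) x by (intro mult_left_mono) auto
  have h1': "2 * real n * (real n - 1) * r = (real n - 1) / 2 * (r * (4 * real n))" by (simp add: algebra_simps)
  have h2: "0 \<le> real n * (real n + 1) * r^2" using x by simp
  have h3: "2 * 1 \<le> (real n - 1) * (real n - 2)" using x by (intro mult_mono) auto
  show ?thesis unfolding P0_def using h1 h1' h2 h3 by linarith
qed

lemma P0_high: assumes "n \<ge> 3" "0 \<le> s" "s * (4 * real n) \<le> 1"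
  shows "P0 n (1 - s) \<ge> 1"
proof -
  have x: "real n \<ge> 3" using assms by simp
  have e: "P0 n (1 - s) = 2 - s * (4 * real n) + real n * (real n + 1) * s^2"
    unfolding P0_def by (simp add: algebra_simps power2_eq_square)
  have h2: "0 \<le> real n * (real n + 1) * s^2" using x by simp
  show ?thesis unfolding e using h2 assms(3) by linarith
qed

lemma Q0_mid: assumes "n \<ge> 3" "0 < a" "a \<le> r" "r \<le> b" "b < 1"
  shows "Q0 n r \<ge> a ^ (n-1) * (1 - b)^2"
proof -
  obtain m where m: "n = m + 3" using assms by (metis add.commute le_iff_add)
  have e: "Q0 n r = r ^ (n-1) * (1 - r)^2"
    unfolding Q0_def m by (simp add: power_add algebra_simps power2_eq_square eval_nat_numeral)
  have "a ^ (n-1) \<le> r ^ (n-1)" using assms by (intro power_mono) auto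
  moreover have "(1 - b)^2 \<le> (1 - r)^2" using assms by (intro power_mono) auto
  ultimately show ?thesis unfolding e using assms
    by (intro mult_mono) auto
qed

theorem lemma4p9:
  fixes n :: nat
  assumes "n \<ge> 3"
  shows "\<exists>e0>0. \<forall>e::real. 0 < e \<and> e < 1 \<and> e < e0 \<longrightarrow>
           (\<forall>r::real. e < r \<and> r < 1 \<longrightarrow> Qpoly n e r > 0)"
proof -
  define x where "x = real n"
  have x3: "x \<ge> 3" using assms x_def by simp
  define a1 where "a1 = (x - 2) / (4 * x)"
  define b1 where "b1 = 1 - 1 / (4 * x)"
  have a1pos: "0 < a1" unfolding a1_def using x3 by simp
  have a1lt: "a1 < 1/4" unfolding a1_def using x3 by (simp add: divide_simps)
  have b1gt: "3/4 < b1" unfolding b1_def using x3 by (simp add: divide_simps)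
  have b1lt: "b1 < 1" unfolding b1_def using x3 by simp
  define m0 where "m0 = a1 ^ (n-1) * (1 - b1)^2"
  have m0pos: "0 < m0" unfolding m0_def using a1pos b1lt by simp
  have "a1 ^ (n-1) \<le> 1" using a1pos a1lt by (intro power_le_one) auto
  moreover have "(1 - b1)^2 \<le> 1" using b1lt b1gt by (intro power_le_one) auto
  ultimately have m01: "m0 \<le> 1" unfolding m0_def using a1pos b1lt by (intro mult_le_one) auto
  define eta where "eta = m0 / 8"
  have etapos: "0 < eta" unfolding eta_def using m0pos by simp
  note C = cont[OF assms, unfolded isCont_def]
  note V = vals0[OF assms, folded x_def]
  have xpos: "0 < x" using x3 by simp
  have Den0: "Den n 0 \<noteq> 0" using V(5) x3 by simp
  have Den0': "0 < \<bar>Den n 0\<bar>" using Den0 by simp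
  obtain s1 where s1: "s1 > 0" "\<forall>e. e \<noteq> 0 \<and> norm (e - 0) < s1 \<longrightarrow> norm (Dfun n e - Dfun n 0) < x"
    using LIM_D[OF C(1) xpos] by blast
  obtain s2 where s2: "s2 > 0" "\<forall>e. e \<noteq> 0 \<and> norm (e - 0) < s2 \<longrightarrow> norm (Den n e - Den n 0) < \<bar>Den n 0\<bar>"
    using LIM_D[OF C(2) Den0'] by blast
  obtain s3 where s3: "s3 > 0" "\<forall>e. e \<noteq> 0 \<and> norm (e - 0) < s3 \<longrightarrow> norm (delta n e - delta n 0) < eta"
    using LIM_D[OF C(3) etapos] by blast
  obtain s4 where s4: "s4 > 0" "\<forall>e. e \<noteq> 0 \<and> norm (e - 0) < s4 \<longrightarrow> norm (gamma n e - gamma n 0) < eta"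
    using LIM_D[OF C(4) etapos] by blast
  obtain s5 where s5: "s5 > 0" "\<forall>e. e \<noteq> 0 \<and> norm (e - 0) < s5 \<longrightarrow> norm (alpha n e - alpha n 0) < eta"
    using LIM_D[OF C(5) etapos] by blast
  obtain s6 where s6: "s6 > 0" "\<forall>e. e \<noteq> 0 \<and> norm (e - 0) < s6 \<longrightarrow> norm (beta n e - beta n 0) < eta"
    using LIM_D[OF C(6) etapos] by blast
  define e0 where "e0 = min a1 (min s1 (min s2 (min s3 (min s4 (min s5 s6)))))"
  have e0pos: "e0 > 0" unfolding e0_def using a1pos s1 s2 s3 s4 s5 s6 by simp
  show ?thesis
  proof (intro exI[of _ e0] conjI allI impI e0pos)
    fix e r :: real
    assume ea: "0 < e \<and> e < 1 \<and> e < e0" and ra: "e < r \<and> r < 1"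
    have ee: "e \<noteq> 0 \<and> norm (e - 0) < s" if "e0 \<le> s" for s using ea that by auto
    have le: "e0 \<le> a1" "e0 \<le> s1" "e0 \<le> s2" "e0 \<le> s3" "e0 \<le> s4" "e0 \<le> s5" "e0 \<le> s6"
      unfolding e0_def by (simp_all add: min.coboundedI1 min.coboundedI2)
    have hD: "\<bar>Dfun n e - x\<bar> < x" using s1(2) ee[OF le(2)] V(1) by auto
    have hDen: "\<bar>Den n e - Den n 0\<bar> < \<bar>Den n 0\<bar>" using s2(2) ee[OF le(3)] by auto
    have hd: "\<bar>delta n e + x * (x + 1)\<bar> < eta" using s3(2) ee[OF le(4)] V(6) by auto
    have hg: "\<bar>gamma n e\<bar> < eta" using s4(2) ee[OF le(5)] V(7) by auto
    have ha: "\<bar>alpha n e\<bar> < eta" using s5(2) ee[OF le(6)] V(8) by auto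
    have hb: "\<bar>beta n e\<bar> < eta" using s6(2) ee[OF le(7)] V(9) by auto
    have Dnz: "Dfun n e \<noteq> 0" using hD by auto
    have Dennz: "Den n e \<noteq> 0" using hDen by auto
    define d where "d = delta n e"
    define g where "g = gamma n e"
    have al: "al n d g = alpha n e" unfolding al_def alpha_def d_def g_def ..
    have be: "be n d g = beta n e" unfolding be_def beta_def d_def g_def ..
    have Qe: "Qg n d g e = 0" unfolding d_def g_def using Qg_e_zero[OF assms Dnz] .
    have Q1e: "Q1 n d g e > 0"
    proof -
      have "Q1 n d g e = e ^ (n-2) * (1 - e)" unfolding d_def g_def using Q1_e[OF assms Dnz Dennz] .
      then show ?thesis using ea by simp
    qed
    have Q11: "Q1 n d g 1 = 0" using Q1_1[OF assms] .
    have Qg1: "Qg n d g 1 = 0" using Qg_1[OF assms] .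
    have gen4: "\<And>a b::real. \<bar>a\<bar> < eta \<Longrightarrow> \<bar>b\<bar> < eta \<Longrightarrow> 2*\<bar>b\<bar> + 2*\<bar>a\<bar> < 4*eta" by linarith
    have gen6: "\<And>a b c q::real. \<bar>a\<bar> < eta \<Longrightarrow> \<bar>b\<bar> < eta \<Longrightarrow> \<bar>c\<bar> < eta \<Longrightarrow> \<bar>q\<bar> < eta \<Longrightarrow> 2*\<bar>b\<bar> + 2*\<bar>a\<bar> + \<bar>c\<bar> + \<bar>q\<bar> < 6*eta" by linarith
    have Pcpos: "Pc n d g y > 0" if "0 \<le> y" "y \<le> a1 \<or> b1 \<le> y" "y \<le> 1" for y
    proof -
      have err: "\<bar>Pc n d g y - P0 n y\<bar> < 1/2"
      proof -
        have "\<bar>Pc n d g y - P0 n y\<bar> \<le> 2 * \<bar>g\<bar> + 2 * \<bar>d + real n * (real n + 1)\<bar>"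
          using Pc_err that by blast
        also have "\<dots> < 4 * eta" using hd hg unfolding d_def g_def x_def
          by (rule gen4)
        also have "\<dots> \<le> 1/2" unfolding eta_def using m01 by simp
        finally show ?thesis .
      qed
      have "P0 n y \<ge> 1"
        using \<open>y \<le> a1 \<or> b1 \<le> y\<close>
      proof
        assume "y \<le> a1"
        then have "y * (4 * real n) \<le> real n - 2" unfolding a1_def x_def using x3 x_def
          by (simp add: pos_le_divide_eq)
        then show ?thesis using P0_low[OF assms \<open>0 \<le> y\<close>] by simp
      next
        assume "b1 \<le> y"
        then have "1 - y \<le> 1 / (4 * x)" unfolding b1_def by simp
        then have "(1 - y) * (4 * x) \<le> 1" using xpos by (simp add: pos_le_divide_eq)
        then have "(1 - y) * (4 * real n) \<le> 1" unfolding x_def .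
        then show ?thesis using P0_high[OF assms, of "1 - y"] that by simp
      qed
      then show ?thesis using err by linarith
    qed
    have Qmid: "Qg n d g y > 0" if "a1 \<le> y" "y \<le> b1" for y
    proof -
      have y01: "0 \<le> y" "y \<le> 1" using that a1pos b1lt by auto
      have "\<bar>Qg n d g y - Q0 n y\<bar> \<le> 2 * \<bar>g\<bar> + 2 * \<bar>d + real n * (real n + 1)\<bar> + \<bar>al n d g\<bar> + \<bar>be n d g\<bar>"
        using Qg_err[OF assms y01] .
      also have "\<dots> < 6 * eta" unfolding al be using hd hg ha hb unfolding d_def g_def x_def
        by (rule gen6)
      finally have err: "\<bar>Qg n d g y - Q0 n y\<bar> < 6 * eta" .
      have "Q0 n y \<ge> m0" unfolding m0_def using Q0_mid[OF assms a1pos that b1lt] .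
      then show ?thesis using err unfolding eta_def using m0pos by linarith
    qed
    have DQ: "\<And>y. (Qg n d g has_real_derivative Q1 n d g y) (at y)" using Qg_deriv[OF assms] .
    have DQ1: "\<And>y. (Q1 n d g has_real_derivative y^(n-3) * Pc n d g y) (at y)" using Q1_deriv[OF assms] .
    have "Qpoly n e r = Qg n d g r" unfolding Qpoly_Qg d_def g_def ..
    moreover have "Qg n d g r > 0"
    proof (cases "r \<le> a1")
      case True
      have Q1pos: "Q1 n d g y > 0" if "e \<le> y" "y \<le> r" for y
      proof (cases "y = e")
        case True then show ?thesis using Q1e by simp
      next
        case False
        then have "e < y" using that by simp
        have "Q1 n d g e < Q1 n d g y"
        proof (rule DERIV_pos_imp_increasing[of e y "Q1 n d g", OF \<open>e < y\<close>])
          fix z assume z: "e \<le> z" "z \<le> y"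
          have "z > 0" using z ea by simp
          moreover have "Pc n d g z > 0" using Pcpos[of z] z that True ea a1lt by auto
          ultimately show "\<exists>yy. DERIV (Q1 n d g) z :> yy \<and> yy > 0" using DQ1[of z] by auto
        qed
        then show ?thesis using Q1e by simp
      qed
      have "Qg n d g e < Qg n d g r"
      proof (rule DERIV_pos_imp_increasing[of e r "Qg n d g"])
        show "e < r" using ra by simp
        fix z assume z: "e \<le> z" "z \<le> r"
        show "\<exists>yy. DERIV (Qg n d g) z :> yy \<and> yy > 0" using DQ[of z] Q1pos[OF z] by auto
      qed
      then show ?thesis using Qe by simp
    next
      case False
      show ?thesis
      proof (cases "r \<le> b1")
        case True then show ?thesis using Qmid False by simp
      next
        case False
        have Q1neg: "Q1 n d g y < 0" if "r \<le> y" "y < 1" for y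
        proof -
          have "Q1 n d g y < Q1 n d g 1"
          proof (rule DERIV_pos_imp_increasing[of y 1 "Q1 n d g", OF \<open>y < 1\<close>])
            fix z assume z: "y \<le> z" "z \<le> 1"
            have "z > 0" using z that False b1gt by simp
            moreover have "Pc n d g z > 0" using Pcpos[of z] z that False b1gt by auto
            ultimately show "\<exists>yy. DERIV (Q1 n d g) z :> yy \<and> yy > 0" using DQ1[of z] by auto
          qed
          then show ?thesis using Q11 by simp
        qed
        have "Qg n d g 1 < Qg n d g r"
        proof (rule DERIV_neg_imp_decreasing_open[of r 1 "Qg n d g"])
          show "r < 1" using ra by simp
          fix z assume z: "r < z" "z < 1"
          show "\<exists>yy. DERIV (Qg n d g) z :> yy \<and> yy < 0" using DQ[of z] Q1neg[of z] z by auto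
        next
          show "continuous_on {r..1} (Qg n d g)"
            using DQ by (meson DERIV_isCont continuous_at_imp_continuous_on)
        qed
        then show ?thesis using Qg1 by simp
      qed
    qed
    ultimately show "Qpoly n e r > 0" by simp
  qed
qed

end
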